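(* Let $R$ be a $*$-regular ring. Then $R$ is strongly $J$-$*$-clean if and only if $R$ is Boolean.
   Context: All rings are associative with identity. A $*$-ring is a ring $R$ with an involution $*$, i.e. a map $a\mapsto a^*$ with $(a+b)^*=a^*+b^*$, $(ab)^*=b^*a^*$, $(a^* )^*=a$. A projection is an element $e$ with $e^2=e=e^*$. A $*$-ring $R$ is $*$-regular if it is von Neumann regular and the involution is proper; equivalently, for every $x\in R$ there exists a projection $p$ with $xR=pR$. $J(R)$ denotes the Jacobson radical. $R$ is strongly $J$-$*$-clean if every $a\in R$ can be written $a=e+u$ with $e$ a projection, $u\in J(R)$ and $ae=ea$. A ring is Boolean if every element is idempotent. *)

theory Defs
  imports Main
begin

definition is_involution :: "('a::ring_1 \<Rightarrow> 'a) \<Rightarrow> bool" where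
  "is_involution star \<longleftrightarrow>
     (\<forall>a b. star (a + b) = star a + star b) \<and>
     (\<forall>a b. star (a * b) = star b * star a) \<and>
     (\<forall>a. star (star a) = a)"

definition is_projection :: "('a::ring_1 \<Rightarrow> 'a) \<Rightarrow> 'a \<Rightarrow> bool" where
  "is_projection star e \<longleftrightarrow> e * e = e \<and> star e = e"

definition von_neumann_regular :: "'a::ring_1 itself \<Rightarrow> bool" where
  "von_neumann_regular _ \<longleftrightarrow> (\<forall>x::'a. \<exists>y. x * y * x = x)"

definition proper_involution :: "('a::ring_1 \<Rightarrow> 'a) \<Rightarrow> bool" where
  "proper_involution star \<longleftrightarrow> (\<forall>x. star x * x = 0 \<longrightarrow> x = 0)"

definition star_regular :: "('a::ring_1 \<Rightarrow> 'a) \<Rightarrow> bool" where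
  "star_regular star \<longleftrightarrow> is_involution star \<and> von_neumann_regular TYPE('a)
     \<and> proper_involution star"

definition left_ideal :: "'a::ring_1 set \<Rightarrow> bool" where
  "left_ideal I \<longleftrightarrow> 0 \<in> I \<and> (\<forall>x\<in>I. \<forall>y\<in>I. x + y \<in> I) \<and> (\<forall>x\<in>I. - x \<in> I)
     \<and> (\<forall>r. \<forall>x\<in>I. r * x \<in> I)"

definition maximal_left_ideal :: "'a::ring_1 set \<Rightarrow> bool" where
  "maximal_left_ideal I \<longleftrightarrow> left_ideal I \<and> I \<noteq> UNIV \<and>
     (\<forall>K. left_ideal K \<and> I \<subseteq> K \<and> K \<noteq> UNIV \<longrightarrow> K = I)"

definition jacobson :: "'a::ring_1 set" where
  "jacobson = \<Inter> {I. maximal_left_ideal I}"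

definition strongly_J_star_clean :: "('a::ring_1 \<Rightarrow> 'a) \<Rightarrow> bool" where
  "strongly_J_star_clean star \<longleftrightarrow>
     (\<forall>a. \<exists>e u. a = e + u \<and> is_projection star e \<and> u \<in> jacobson \<and> a * e = e * a)"

definition boolean_ring :: "'a::ring_1 itself \<Rightarrow> bool" where
  "boolean_ring _ \<longleftrightarrow> (\<forall>x::'a. x * x = x)"

end

theory Submission
  imports Defs
begin

lemma left_ideal_one: "left_ideal I \<Longrightarrow> 1 \<in> I \<Longrightarrow> I = UNIV"
proof -
  assume "left_ideal I" "1 \<in> I"
  then have "\<And>x. x * 1 \<in> I" unfolding left_ideal_def by blast
  then show "I = UNIV" by auto
qed

lemma exists_maximal:
  fixes L :: "'a::ring_1 set"
  assumes L: "left_ideal L" and n: "1 \<notin> L"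
  shows "\<exists>M. maximal_left_ideal M \<and> L \<subseteq> M"
proof -
  define A where "A = {K::'a set. left_ideal K \<and> L \<subseteq> K \<and> 1 \<notin> K}"
  have "\<exists>M\<in>A. \<forall>X\<in>A. M \<subseteq> X \<longrightarrow> X = M"
  proof (rule subset_Zorn)
    fix C assume ch: "subset.chain A C"
    show "\<exists>U\<in>A. \<forall>X\<in>C. X \<subseteq> U"
    proof (cases "C = {}")
      case True then show ?thesis using L n unfolding A_def by auto
    next
      case False
      have CA: "C \<subseteq> A" and tot: "\<And>X Y. X \<in> C \<Longrightarrow> Y \<in> C \<Longrightarrow> X \<subseteq> Y \<or> Y \<subseteq> X"
        using ch unfolding subset.chain_def by auto
      have li: "\<And>X. X \<in> C \<Longrightarrow> left_ideal X" using CA unfolding A_def by auto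
      have "left_ideal (\<Union>C)"
        unfolding left_ideal_def
      proof (intro conjI ballI allI)
        show "0 \<in> \<Union>C" using False li unfolding left_ideal_def by blast
      next
        fix x y assume "x \<in> \<Union>C" "y \<in> \<Union>C"
        then obtain X Y where XY: "X \<in> C" "Y \<in> C" "x \<in> X" "y \<in> Y" by blast
        show "x + y \<in> \<Union>C"
        proof (cases "X \<subseteq> Y")
          case True then show ?thesis using XY li[of Y] unfolding left_ideal_def by blast
        next
          case False then have "Y \<subseteq> X" using tot XY by blast
          then show ?thesis using XY li[of X] unfolding left_ideal_def by blast
        qed
      next
        fix x assume "x \<in> \<Union>C"
        then show "- x \<in> \<Union>C" using li unfolding left_ideal_def by blast
      next
        fix r x assume "x \<in> \<Union>C"
        then show "r * x \<in> \<Union>C" using li unfolding left_ideal_def by blast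
      qed
      moreover have "L \<subseteq> \<Union>C" "1 \<notin> \<Union>C" using False CA unfolding A_def by auto
      ultimately show ?thesis unfolding A_def by blast
    qed
  qed
  then obtain M where M: "M \<in> A" "\<And>X. X \<in> A \<Longrightarrow> M \<subseteq> X \<Longrightarrow> X = M" by blast
  have "maximal_left_ideal M"
    unfolding maximal_left_ideal_def
  proof (intro conjI allI impI)
    show "left_ideal M" using M unfolding A_def by auto
    show "M \<noteq> UNIV" using M unfolding A_def by auto
  next
    fix K assume K: "left_ideal K \<and> M \<subseteq> K \<and> K \<noteq> UNIV"
    then have "1 \<notin> K" using left_ideal_one by blast
    then have "K \<in> A" using K M(1) unfolding A_def by auto
    then show "K = M" using M(2) K by blast
  qed
  then show ?thesis using M(1) unfolding A_def by auto
qed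

lemma jacobson_left: "u \<in> jacobson \<Longrightarrow> r * u \<in> (jacobson::'a::ring_1 set)"
proof -
  assume u: "u \<in> jacobson"
  show ?thesis unfolding jacobson_def
  proof (rule InterI)
    fix M :: "'a set" assume "M \<in> {I. maximal_left_ideal I}"
    then have "left_ideal M" "u \<in> M" using u unfolding jacobson_def maximal_left_ideal_def by auto
    then show "r * u \<in> M" unfolding left_ideal_def by blast
  qed
qed

lemma jacobson_zero: "0 \<in> (jacobson::'a::ring_1 set)"
  unfolding jacobson_def maximal_left_ideal_def left_ideal_def by blast

lemma idem_jacobson:
  fixes f :: "'a::ring_1"
  assumes f: "f * f = f" and J: "f \<in> jacobson"
  shows "f = 0"
proof (rule ccontr)
  assume nz: "f \<noteq> 0"
  define L where "L = range (\<lambda>r. r * (1 - f))"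
  have L: "left_ideal L" unfolding left_ideal_def L_def
  proof (intro conjI ballI allI)
    show "0 \<in> range (\<lambda>r. r * (1 - f))" by (rule range_eqI[of _ _ 0]) simp
  next
    fix x y assume "x \<in> range (\<lambda>r. r * (1 - f))" "y \<in> range (\<lambda>r. r * (1 - f))"
    then obtain r q where "x = r * (1 - f)" "y = q * (1 - f)" by blast
    then have e: "x + y = (r + q) * (1 - f)" by (simp add: distrib_right)
    show "x + y \<in> range (\<lambda>r. r * (1 - f))" unfolding e by (rule rangeI)
  next
    fix x assume "x \<in> range (\<lambda>r. r * (1 - f))"
    then obtain r where "x = r * (1 - f)" by blast
    then have e: "- x = (- r) * (1 - f)" by simp
    show "- x \<in> range (\<lambda>r. r * (1 - f))" unfolding e by (rule rangeI)
  next
    fix t x assume "x \<in> range (\<lambda>r. r * (1 - f))"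
    then obtain r where "x = r * (1 - f)" by blast
    then have e: "t * x = (t * r) * (1 - f)" by (simp add: mult.assoc)
    show "t * x \<in> range (\<lambda>r. r * (1 - f))" unfolding e by (rule rangeI)
  qed
  have "1 \<notin> L"
  proof
    assume "1 \<in> L"
    then obtain r where eq0: "1 = r * (1 - f)" unfolding L_def by blast
    have eq: "r * (1 - f) = 1" using eq0 by (rule sym)
    have "f = r * (1 - f) * f" by (simp only: eq mult_1_left)
    also have "\<dots> = r * ((1 - f) * f)" by (simp only: mult.assoc)
    also have "(1 - f) * f = 0" using f by (simp add: left_diff_distrib)
    finally show False using nz by simp
  qed
  then obtain M where M: "maximal_left_ideal M" "L \<subseteq> M" using exists_maximal L by blast
  have "f \<in> M" using J M(1) unfolding jacobson_def by blast
  moreover have "1 - f \<in> L" unfolding L_def using rangeI[of "\<lambda>r. r * (1 - f)" 1] by simp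
  then have "1 - f \<in> M" using M(2) by blast
  moreover have lM: "left_ideal M" using M(1) unfolding maximal_left_ideal_def by blast
  ultimately have "f + (1 - f) \<in> M" unfolding left_ideal_def by blast
  then have "1 \<in> M" by simp
  then show False using M(1) left_ideal_one unfolding maximal_left_ideal_def by blast
qed

lemma regular_jacobson:
  fixes u :: "'a::ring_1"
  assumes reg: "von_neumann_regular TYPE('a)" and J: "u \<in> jacobson"
  shows "u = 0"
proof -
  obtain y where y: "u * y * u = u" using reg unfolding von_neumann_regular_def by blast
  have "(y * u) * (y * u) = y * (u * y * u)" by (simp add: mult.assoc)
  then have "(y * u) * (y * u) = y * u" using y by simp
  moreover have "y * u \<in> jacobson" using jacobson_left J by blast
  ultimately have "y * u = 0" using idem_jacobson by blast
  then have "u * (y * u) = 0" by simp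
  then show ?thesis using y by (simp add: mult.assoc)
qed

lemma bool_comm:
  fixes x y :: "'a::ring_1"
  assumes b: "boolean_ring TYPE('a)"
  shows "x * y = y * x"
proof -
  have sq: "\<And>z::'a. z * z = z" using b unfolding boolean_ring_def by blast
  have two: "\<And>z::'a. z + z = 0"
  proof -
    fix z :: 'a
    have "(z + z) * (z + z) = z + z" by (rule sq)
    moreover have "(z + z) * (z + z) = z * z + z * z + (z * z + z * z)" by (simp add: distrib_left distrib_right)
    ultimately have "z + z + z + z = z + z" by (simp add: sq add.assoc)
    then have "(z + z) + (z + z) = 0 + (z + z)" by (simp add: add.assoc)
    then show "z + z = 0" by (rule add_right_imp_eq)
  qed
  have "(x + y) * (x + y) = x + y" by (rule sq)
  moreover have "(x + y) * (x + y) = x * x + x * y + (y * x + y * y)" by (simp add: distrib_left distrib_right add.assoc)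
  ultimately have "x + (x * y + y * x) + y = x + 0 + y" by (simp add: sq add.assoc add.left_commute)
  then have "x * y + y * x = 0" by simp
  then have "x * y = - (y * x)" by (simp add: eq_neg_iff_add_eq_0)
  also have "\<dots> = y * x" using two[of "y*x"] by (simp add: minus_unique)
  finally show ?thesis .
qed

theorem corollary2p9:
  fixes star :: "'a::ring_1 \<Rightarrow> 'a"
  assumes "star_regular star"
  shows "strongly_J_star_clean star \<longleftrightarrow> boolean_ring TYPE('a)"
proof
  assume c: "strongly_J_star_clean star"
  have reg: "von_neumann_regular TYPE('a)" using assms unfolding star_regular_def by blast
  show "boolean_ring TYPE('a)" unfolding boolean_ring_def
  proof
    fix a :: 'a
    obtain e u where "a = e + u" "is_projection star e" "u \<in> jacobson"
      using c unfolding strongly_J_star_clean_def by blast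
    moreover have "u = 0" using regular_jacobson[OF reg] \<open>u \<in> jacobson\<close> by blast
    ultimately show "a * a = a" unfolding is_projection_def by simp
  qed
next
  assume b: "boolean_ring TYPE('a)"
  have inv: "is_involution star" and pr: "proper_involution star"
    using assms unfolding star_regular_def by blast+
  have sq: "\<And>z::'a. z * z = z" using b unfolding boolean_ring_def by blast
  have sadd: "\<And>x y. star (x + y) = star x + star y" and smul: "\<And>x y. star (x * y) = star y * star x"
    and ss: "\<And>x. star (star x) = x" using inv unfolding is_involution_def by blast+
  have s1: "star 1 = 1" by (metis mult.left_neutral mult.right_neutral smul ss)
  have s0: "star 0 = 0"
  proof -
    have "star 0 = star 0 + star 0" using sadd[of 0 0] by simp
    then show ?thesis by simp
  qed
  have sneg: "\<And>x. star (- x) = - star x"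
  proof -
    fix x
    have "star (- x) + star x = 0" using sadd[of "- x" x] s0 by simp
    then show "star (- x) = - star x" by (simp add: eq_neg_iff_add_eq_0)
  qed
  have key: "\<And>a::'a. a = a * star a"
  proof -
    fix a :: 'a
    define s where "s = star a"
    define p where "p = a * s"
    define y where "y = a - p"
    have sy: "star y = s - p"
    proof -
      have "star y = star a + star (- (a * s))" unfolding y_def p_def diff_conv_add_uminus by (rule sadd)
      also have "\<dots> = s - star (a * s)" by (simp add: sneg s_def)
      also have "star (a * s) = p" unfolding p_def s_def by (simp add: smul ss)
      finally show ?thesis .
    qed
    have c: "s * a = p" unfolding p_def by (rule bool_comm[OF b])
    have e1: "s * p = p"
    proof -
      have "s * (a * s) = (s * a) * s" by (simp add: mult.assoc)
      also have "\<dots> = a * (s * s)" unfolding c p_def by (simp add: mult.assoc)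
      finally show ?thesis by (simp add: sq p_def)
    qed
    have e2: "p * a = p" proof -
      have "a * s * a = a * (s * a)" by (simp add: mult.assoc)
      also have "\<dots> = (a * a) * s" unfolding c p_def by (simp add: mult.assoc)
      finally show ?thesis by (simp add: sq p_def)
    qed
    have e3: "p * p = p" proof -
      have "p * p = (p * a) * s" unfolding p_def by (simp add: mult.assoc)
      then show ?thesis using e2 p_def by (simp add: mult.assoc sq)
    qed
    have "star y * y = (s - p) * (a - p)" using sy unfolding y_def by simp
    also have "\<dots> = s * a - s * p - (p * a - p * p)" by (simp add: left_diff_distrib right_diff_distrib)
    also have "\<dots> = 0" using c e1 e2 e3 by simp
    finally have "y = 0" using pr unfolding proper_involution_def by blast
    then show "a = a * star a" unfolding y_def p_def s_def by simp
  qed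
  have fix_: "\<And>a. star a = a"
  proof -
    fix a
    have "star a = star a * star (star a)" by (rule key)
    also have "\<dots> = star a * a" by (simp add: ss)
    also have "\<dots> = a * star a" by (rule bool_comm[OF b])
    also have "\<dots> = a" by (rule key[symmetric])
    finally show "star a = a" .
  qed
  show "strongly_J_star_clean star" unfolding strongly_J_star_clean_def
  proof
    fix a :: 'a
    show "\<exists>e u. a = e + u \<and> is_projection star e \<and> u \<in> jacobson \<and> a * e = e * a"
    proof (intro exI conjI)
      show "a = a + 0" by simp
      show "is_projection star a" unfolding is_projection_def using sq fix_ by blast
      show "(0::'a) \<in> jacobson" by (rule jacobson_zero)
      show "a * a = a * a" ..
    qed
  qed
qed

end
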